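(* Let $n,p$ be positive integers, $X\in\mathbb{R}^{n\times p}$, $\mathbf y\in\mathbb{R}^n$ and $\delta>0$, and let $\mathbf t\in[0,1)^p$. Then \[ (L_{\mathbf t})_{+}=\frac1n\left[(T_{\mathbf t})_{+}(X^\top X)_{+}(T_{\mathbf t})_{+}+\delta\big(I-(T_{\mathbf t})_{+}^2\big)\right]. \] Furthermore: (i) $(L_{\mathbf t}^{-1})_0=\frac{n}{\delta}I$ and $(L_{\mathbf t}^{-1})_{+}=\big((L_{\mathbf t})_{+}\big)^{-1}$; (ii) $(\widetilde{\boldsymbol\beta}_{\mathbf t})_0=\mathbf 0$ and $(\widetilde{\boldsymbol\beta}_{\mathbf t})_{+}=\big((L_{\mathbf t})_{+}\big)^{-1}\left((\mathbf t)_{+}\odot\left(\frac{X^\top\mathbf y}{n}\right)_{+}\right)$; (iii) $(\mathbf c_{\mathbf t})_0=\mathbf 0$ and $(\mathbf c_{\mathbf t})_{+}=\big((L_{\mathbf t})_{+}\big)^{-1}\big((\mathbf t)_{+}\odot(\mathbf a_{\mathbf t})_{+}\big)$.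
   Context: For $\mathbf t\in[0,1)^p$, $T_{\mathbf t}=\mathrm{Diag}(t_1,\dots,t_p)$, $X_{\mathbf t}=XT_{\mathbf t}$, $L_{\mathbf t}=\frac1n[X_{\mathbf t}^\top X_{\mathbf t}+\delta(I-T_{\mathbf t}^2)]$ (invertible for such $\mathbf t$), $\widetilde{\boldsymbol\beta}_{\mathbf t}=L_{\mathbf t}^{-1}(X_{\mathbf t}^\top\mathbf y/n)$, $\mathbf a_{\mathbf t}=\frac{X^\top X}{n}(\mathbf t\odot\widetilde{\boldsymbol\beta}_{\mathbf t})-\frac{X^\top\mathbf y}{n}$ and $\mathbf c_{\mathbf t}=L_{\mathbf t}^{-1}(\mathbf t\odot\mathbf a_{\mathbf t})$, where $\odot$ is the element-wise product and $I$ denotes an identity matrix of the appropriate size. Let $\mathscr P=\{1,\dots,p\}$ and $\mathscr Z_{\mathbf t}=\{j\in\mathscr P: t_j=0\}$. For $\mathbf u\in\mathbb{R}^p$, $(\mathbf u)_{+}$ (resp. $(\mathbf u)_0$) is the vector obtained by deleting the entries with indices in $\mathscr Z_{\mathbf t}$ (resp. in $\mathscr P\setminus\mathscr Z_{\mathbf t}$). For a $p\times p$ matrix $A$, $(A)_{+}$ (resp. $(A)_0$) is the matrix obtained by deleting the rows and columns with indices in $\mathscr Z_{\mathbf t}$ (resp. in $\mathscr P\setminus\mathscr Z_{\mathbf t}$). *)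

theory Defs
  imports Complex_Main "Jordan_Normal_Form.Matrix" "Jordan_Normal_Form.DL_Submatrix"
begin

(* Matrices/vectors are Jordan_Normal_Form 'real mat' / 'real vec', indices start at 0. *)

(* inverse of a square matrix (meaningful when it is invertible) *)
definition minv :: "real mat \<Rightarrow> real mat" where
  "minv A = (THE B. B \<in> carrier_mat (dim_row A) (dim_row A) \<and>
                    A * B = 1\<^sub>m (dim_row A) \<and> B * A = 1\<^sub>m (dim_row A))"

definition subvec :: "'a vec \<Rightarrow> nat set \<Rightarrow> 'a vec" where
  "subvec v I = vec (card {i. i < dim_vec v \<and> i \<in> I}) (\<lambda>i. v $ pick I i)"

definition hadamard :: "real vec \<Rightarrow> real vec \<Rightarrow> real vec" (infixl "\<odot>" 70) where
  "u \<odot> v = vec (dim_vec u) (\<lambda>i. u $ i * v $ i)"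

definition Tmat :: "real vec \<Rightarrow> real mat" where
  "Tmat t = mat (dim_vec t) (dim_vec t) (\<lambda>(i,j). if i = j then t $ i else 0)"

definition Xmat :: "real mat \<Rightarrow> real vec \<Rightarrow> real mat" where
  "Xmat X t = X * Tmat t"

definition Lmat :: "real mat \<Rightarrow> real \<Rightarrow> real vec \<Rightarrow> real mat" where
  "Lmat X \<delta> t = (1 / real (dim_row X)) \<cdot>\<^sub>m
     (transpose_mat (Xmat X t) * Xmat X t +
      \<delta> \<cdot>\<^sub>m (1\<^sub>m (dim_vec t) - Tmat t * Tmat t))"

definition betat :: "real mat \<Rightarrow> real vec \<Rightarrow> real \<Rightarrow> real vec \<Rightarrow> real vec" where
  "betat X y \<delta> t = minv (Lmat X \<delta> t) *\<^sub>v
     ((1 / real (dim_row X)) \<cdot>\<^sub>v (transpose_mat (Xmat X t) *\<^sub>v y))"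

definition avec :: "real mat \<Rightarrow> real vec \<Rightarrow> real \<Rightarrow> real vec \<Rightarrow> real vec" where
  "avec X y \<delta> t = ((1 / real (dim_row X)) \<cdot>\<^sub>m (transpose_mat X * X)) *\<^sub>v (t \<odot> betat X y \<delta> t)
                    - (1 / real (dim_row X)) \<cdot>\<^sub>v (transpose_mat X *\<^sub>v y)"

definition cvec :: "real mat \<Rightarrow> real vec \<Rightarrow> real \<Rightarrow> real vec \<Rightarrow> real vec" where
  "cvec X y \<delta> t = minv (Lmat X \<delta> t) *\<^sub>v (t \<odot> avec X y \<delta> t)"

definition Zset :: "real vec \<Rightarrow> nat set" where
  "Zset t = {j. j < dim_vec t \<and> t $ j = 0}"

definition Pset :: "real vec \<Rightarrow> nat set" where
  "Pset t = {j. j < dim_vec t \<and> t $ j \<noteq> 0}"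

end

theory Submission
  imports Defs "Jordan_Normal_Form.Determinant"
begin


lemma Tmat_carrier[simp]: "Tmat t \<in> carrier_mat (dim_vec t) (dim_vec t)"
  unfolding Tmat_def by simp
lemma Tmat_dims[simp]: "dim_row (Tmat t) = dim_vec t" "dim_col (Tmat t) = dim_vec t"
  unfolding Tmat_def by simp_all
lemma Tmat_index: "i < dim_vec t \<Longrightarrow> j < dim_vec t \<Longrightarrow> Tmat t $$ (i,j) = (if i = j then t $ i else 0)"
  unfolding Tmat_def by simp

lemma mult_Tmat_right:
  assumes "A \<in> carrier_mat m (dim_vec t)" "i < m" "j < dim_vec t"
  shows "(A * Tmat t) $$ (i,j) = A $$ (i,j) * t $ j"
proof -
  have "(A * Tmat t) $$ (i,j) = (\<Sum>k\<in>{0..<dim_vec t}. A $$ (i,k) * (if k = j then t $ j else 0))"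
    using assms by (auto simp: scalar_prod_def Tmat_index intro!: sum.cong)
  also have "\<dots> = (\<Sum>k\<in>{0..<dim_vec t}. (if k = j then A $$ (i,j) * t $ j else 0))"
    by (rule sum.cong) auto
  also have "\<dots> = A $$ (i,j) * t $ j" using assms by simp
  finally show ?thesis .
qed

lemma mult_Tmat_left:
  assumes "A \<in> carrier_mat (dim_vec t) m" "i < dim_vec t" "j < m"
  shows "(Tmat t * A) $$ (i,j) = t $ i * A $$ (i,j)"
proof -
  have "(Tmat t * A) $$ (i,j) = (\<Sum>k\<in>{0..<dim_vec t}. (if i = k then t $ i else 0) * A $$ (k,j))"
    using assms by (auto simp: scalar_prod_def Tmat_index intro!: sum.cong)
  also have "\<dots> = (\<Sum>k\<in>{0..<dim_vec t}. (if k = i then t $ i * A $$ (i,j) else 0))"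
    by (rule sum.cong) auto
  also have "\<dots> = t $ i * A $$ (i,j)" using assms by simp
  finally show ?thesis .
qed

lemma transpose_Tmat: "transpose_mat (Tmat t) = Tmat t"
  by (rule eq_matI) (auto simp: Tmat_index)

lemma L_eq:
  assumes X: "X \<in> carrier_mat n p" and t: "t \<in> carrier_vec p"
  shows "Lmat X \<delta> t = (1 / real n) \<cdot>\<^sub>m (Tmat t * (transpose_mat X * X) * Tmat t + \<delta> \<cdot>\<^sub>m (1\<^sub>m p - Tmat t * Tmat t))"
proof -
  have T: "Tmat t \<in> carrier_mat p p" using t by (metis Tmat_carrier carrier_vecD)
  have "transpose_mat (Xmat X t) * Xmat X t = Tmat t * transpose_mat X * (X * Tmat t)"
    unfolding Xmat_def using X T by (simp add: transpose_mult transpose_Tmat)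
  also have "\<dots> = Tmat t * (transpose_mat X * X) * Tmat t"
  proof -
    have a: "transpose_mat X * (X * Tmat t) = transpose_mat X * X * Tmat t"
      using X T by (simp add: assoc_mult_mat[of _ p n _ p _ p])
    have b: "Tmat t * transpose_mat X * (X * Tmat t) = Tmat t * (transpose_mat X * (X * Tmat t))"
      using X T by (simp add: assoc_mult_mat[of _ p p _ n _ p])
    have c: "Tmat t * (transpose_mat X * X * Tmat t) = Tmat t * (transpose_mat X * X) * Tmat t"
      using X T by (simp add: assoc_mult_mat[of _ p p _ p _ p])
    show ?thesis using a b c by simp
  qed
  finally show ?thesis unfolding Lmat_def using X t by simp
qed

lemma L_index:
  assumes X: "X \<in> carrier_mat n p" and t: "t \<in> carrier_vec p" and i: "i < p" and j: "j < p"
  shows "Lmat X \<delta> t $$ (i,j) = (1 / real n) * (t $ i * (transpose_mat X * X) $$ (i,j) * t $ j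
      + \<delta> * ((if i = j then 1 else 0) - (if i = j then t $ i * t $ i else 0)))"
proof -
  have T: "Tmat t \<in> carrier_mat p p" using t by (metis Tmat_carrier carrier_vecD)
  have p: "dim_vec t = p" using t by simp
  have G: "transpose_mat X * X \<in> carrier_mat p p" using X by simp
  have 1: "(Tmat t * (transpose_mat X * X) * Tmat t) $$ (i,j) = t $ i * (transpose_mat X * X) $$ (i,j) * t $ j"
    using mult_Tmat_right[of "Tmat t * (transpose_mat X * X)" p t i j] mult_Tmat_left[of "transpose_mat X * X" t p i j]
      G T i j p by simp
  have 2: "(Tmat t * Tmat t) $$ (i,j) = (if i = j then t $ i * t $ i else 0)"
    using mult_Tmat_left[of "Tmat t" t p i j] T i j p by (simp add: Tmat_index)
  have d: "dim_row (Tmat t * (transpose_mat X * X) * Tmat t) = p" "dim_col (Tmat t * (transpose_mat X * X) * Tmat t) = p"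
    using p by simp_all
  have e: "dim_row (Tmat t * Tmat t) = p" "dim_col (Tmat t * Tmat t) = p" using p by simp_all
  show ?thesis unfolding L_eq[OF X t] using i j d e
    apply (subst index_smult_mat(1)) apply (simp add: d) apply (simp add: d) apply (subst index_add_mat(1)) apply (simp add: d) apply (simp add: d) apply (subst index_smult_mat(1)) apply (simp add: e) apply (simp add: e) apply (subst index_minus_mat(1)) apply (simp add: e) apply (simp add: e) apply (unfold 1 2) by simp
qed

lemma pick_bij: assumes "finite P" shows "bij_betw (pick P) {..<card P} P"
proof (rule bij_betw_imageI)
  show "inj_on (pick P) {..<card P}"
  proof (rule inj_onI)
    fix a b assume a: "a \<in> {..<card P}" and b: "b \<in> {..<card P}" and e: "pick P a = pick P b"
    show "a = b"
    proof (rule ccontr)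
      assume "a \<noteq> b"
      then consider "a < b" | "b < a" by linarith
      then show False
      proof cases
        case 1 then show False using pick_mono[of b P a] a b e by simp
      next
        case 2 then show False using pick_mono[of a P b] a b e by simp
      qed
    qed
  qed
  show "pick P ` {..<card P} = P"
  proof
    show "pick P ` {..<card P} \<subseteq> P"
    proof (rule image_subsetI)
      fix i assume "i \<in> {..<card P}"
      then show "pick P i \<in> P" by (intro pick_in_set) simp
    qed
    show "P \<subseteq> pick P ` {..<card P}"
    proof
      fix x assume x: "x \<in> P"
      have "{a \<in> P. a < x} \<subset> P" using x by auto
      then have "card {a \<in> P. a < x} < card P" using assms by (simp add: psubset_card_mono)
      then show "x \<in> pick P ` {..<card P}" using pick_card_in_set[OF x] by (intro image_eqI[of _ _ "card {a \<in> P. a < x}"]) auto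
    qed
  qed
qed

lemma pick_inj: assumes "finite P" "i < card P" "j < card P"
  shows "(pick P i = pick P j) = (i = j)"
  using inj_on_eq_iff[OF bij_betw_imp_inj_on[OF pick_bij[OF assms(1)]]] assms by simp

lemma pick_in: assumes "finite P" "i < card P" shows "pick P i \<in> P"
  by (rule pick_in_set) (use assms in simp)

lemma sum_pick: assumes "finite P" shows "(\<Sum>l<card P. f (pick P l)) = (\<Sum>k\<in>P. f k)"
  using sum.reindex_bij_betw[OF pick_bij[OF assms], of f] by simp

lemma collect_eq: "P \<subseteq> {..<p} \<Longrightarrow> {i. i < p \<and> i \<in> P} = P" by auto

lemma minv_unique:
  assumes A: "A \<in> carrier_mat m m" and C: "C \<in> carrier_mat m m"
    and AC: "A * C = 1\<^sub>m m" and CA: "C * A = 1\<^sub>m m"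
  shows "minv A = C"
  unfolding minv_def
proof (rule the_equality)
  show "C \<in> carrier_mat (dim_row A) (dim_row A) \<and> A * C = 1\<^sub>m (dim_row A) \<and> C * A = 1\<^sub>m (dim_row A)"
    using A C AC CA by simp
  fix B assume B: "B \<in> carrier_mat (dim_row A) (dim_row A) \<and> A * B = 1\<^sub>m (dim_row A) \<and> B * A = 1\<^sub>m (dim_row A)"
  then have B': "B \<in> carrier_mat m m" "B * A = 1\<^sub>m m" using A by auto
  have "B = B * (A * C)" using AC B' by simp
  also have "\<dots> = (B * A) * C" by (rule assoc_mult_mat[OF B'(1) A C, symmetric])
  also have "\<dots> = C" using B' C by simp
  finally show "B = C" .
qed

locale blk =
  fixes M B :: "real mat" and p :: nat and P Z :: "nat set" and d :: real
  assumes M: "M \<in> carrier_mat p p" and B: "B \<in> carrier_mat p p"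
    and MB: "M * B = 1\<^sub>m p" and BM: "B * M = 1\<^sub>m p" and d: "d \<noteq> 0"
    and PZ: "P \<union> Z = {..<p}" "P \<inter> Z = {}"
    and Mz: "\<And>i j. i < p \<Longrightarrow> j < p \<Longrightarrow> i \<in> Z \<or> j \<in> Z \<Longrightarrow> M $$ (i,j) = (if i = j then d else 0)"
begin

lemma finP: "finite P" using PZ(1) finite_lessThan[of p] by (metis finite_Un)
lemma finZ: "finite Z" using PZ(1) finite_lessThan[of p] by (metis finite_Un)
lemma Psub: "P \<subseteq> {..<p}" using PZ by auto
lemma Zsub: "Z \<subseteq> {..<p}" using PZ by auto

lemma Bz: assumes i: "i < p" and j: "j < p" and ij: "i \<in> Z \<or> j \<in> Z"
  shows "B $$ (i,j) = (if i = j then 1 / d else 0)"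
  using ij
proof
  assume iZ: "i \<in> Z"
  have "(M * B) $$ (i,j) = (\<Sum>k\<in>{0..<p}. M $$ (i,k) * B $$ (k,j))"
    using M B i j by (simp add: scalar_prod_def)
  also have "\<dots> = (\<Sum>k\<in>{0..<p}. (if k = i then d * B $$ (i,j) else 0))"
    by (rule sum.cong) (auto simp: Mz iZ i)
  also have "\<dots> = d * B $$ (i,j)" using i by simp
  finally have "d * B $$ (i,j) = (if i = j then 1 else 0)" using MB i j by simp
  then show ?thesis using d by (auto simp: field_simps)
next
  assume jZ: "j \<in> Z"
  have "(B * M) $$ (i,j) = (\<Sum>k\<in>{0..<p}. B $$ (i,k) * M $$ (k,j))"
    using M B i j by (simp add: scalar_prod_def)
  also have "\<dots> = (\<Sum>k\<in>{0..<p}. (if k = j then B $$ (i,j) * d else 0))"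
    by (rule sum.cong) (auto simp: Mz jZ j)
  also have "\<dots> = B $$ (i,j) * d" using j by simp
  finally have "B $$ (i,j) * d = (if i = j then 1 else 0)" using BM i j by simp
  then show ?thesis using d by (auto simp: field_simps)
qed

lemma subP_carrier: "submatrix A P P \<in> carrier_mat (card P) (card P)" if "A \<in> carrier_mat p p" for A
proof -
  have e: "{i. i < p \<and> i \<in> P} = P" by (rule collect_eq[OF Psub])
  have d: "dim_row A = p" "dim_col A = p" using that by auto
  show ?thesis by (intro carrier_matI) (simp_all only: dim_submatrix d e)
qed

lemma subP_index: "A \<in> carrier_mat p p \<Longrightarrow> i < card P \<Longrightarrow> j < card P \<Longrightarrow> submatrix A P P $$ (i,j) = A $$ (pick P i, pick P j)"
proof -
  assume a: "A \<in> carrier_mat p p" "i < card P" "j < card P"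
  have e: "{i. i < p \<and> i \<in> P} = P" by (rule collect_eq[OF Psub])
  have "dim_row A = p" "dim_col A = p" using a by auto
  then show ?thesis using a by (intro submatrix_index) (simp_all only: e)
qed

lemma pickP: "i < card P \<Longrightarrow> pick P i \<in> P" "i < card P \<Longrightarrow> pick P i < p"
  using pick_in[OF finP] Psub by auto

lemma sub_prod:
  assumes A: "A \<in> carrier_mat p p" and C: "C \<in> carrier_mat p p"
    and z: "\<And>i k b. i \<in> P \<Longrightarrow> k \<in> Z \<Longrightarrow> A $$ (i,k) * C $$ (k,b) = 0"
    and i: "i < card P" and j: "j < card P"
  shows "(submatrix A P P * submatrix C P P) $$ (i,j) = (A * C) $$ (pick P i, pick P j)"
proof -
  have "(submatrix A P P * submatrix C P P) $$ (i,j) = (\<Sum>l\<in>{0..<card P}. submatrix A P P $$ (i,l) * submatrix C P P $$ (l,j))"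
    using subP_carrier[OF A] subP_carrier[OF C] i j by (simp add: scalar_prod_def)
  also have "\<dots> = (\<Sum>l<card P. A $$ (pick P i, pick P l) * C $$ (pick P l, pick P j))"
    by (rule sum.cong) (simp_all add: atLeast0LessThan subP_index[OF A] subP_index[OF C] i j)
  also have "\<dots> = (\<Sum>k\<in>P. A $$ (pick P i, k) * C $$ (k, pick P j))"
    by (rule sum_pick[OF finP])
  also have "\<dots> = (\<Sum>k\<in>{0..<p}. A $$ (pick P i, k) * C $$ (k, pick P j))"
  proof (rule sum.mono_neutral_left)
    show "finite {0..<p}" by simp
    show "P \<subseteq> {0..<p}" using Psub by auto
    show "\<forall>k\<in>{0..<p} - P. A $$ (pick P i, k) * C $$ (k, pick P j) = 0"
    proof
      fix k assume "k \<in> {0..<p} - P"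
      then have "k \<in> Z" using PZ by auto
      then show "A $$ (pick P i, k) * C $$ (k, pick P j) = 0" using z[OF pickP(1)[OF i]] by blast
    qed
  qed
  also have "\<dots> = (A * C) $$ (pick P i, pick P j)"
    using A C pickP i j by (simp add: scalar_prod_def)
  finally show ?thesis .
qed

lemma subP_inv1: "submatrix M P P * submatrix B P P = 1\<^sub>m (card P)"
proof (rule eq_matI)
  fix i j assume "i < dim_row (1\<^sub>m (card P))" "j < dim_col (1\<^sub>m (card P))"
  then have i: "i < card P" and j: "j < card P" by auto
  have z: "M $$ (a,k) * B $$ (k,b) = 0" if "a \<in> P" "k \<in> Z" for a k b
  proof -
    have ak: "a < p" "k < p" using that Psub Zsub by auto
    have "a \<noteq> k" using that PZ(2) by blast
    then show ?thesis using Mz[OF ak] that(2) by simp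
  qed
  show "(submatrix M P P * submatrix B P P) $$ (i,j) = 1\<^sub>m (card P) $$ (i,j)"
  proof -
    have pp: "pick P i < p" "pick P j < p" using pickP(2) i j by auto
    have "(submatrix M P P * submatrix B P P) $$ (i,j) = (M * B) $$ (pick P i, pick P j)"
      by (rule sub_prod[OF M B z i j])
    also have "\<dots> = (if pick P i = pick P j then 1 else 0)" unfolding MB using pp by simp
    also have "\<dots> = (if i = j then 1 else 0)" unfolding pick_inj[OF finP i j] ..
    also have "\<dots> = 1\<^sub>m (card P) $$ (i,j)" using i j by simp
    finally show ?thesis .
  qed
qed (simp_all only: index_mult_mat(2,3) index_one_mat(2,3) carrier_matD[OF subP_carrier[OF M]] carrier_matD[OF subP_carrier[OF B]])

lemma subP_inv2: "submatrix B P P * submatrix M P P = 1\<^sub>m (card P)"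
proof (rule eq_matI)
  fix i j assume "i < dim_row (1\<^sub>m (card P))" "j < dim_col (1\<^sub>m (card P))"
  then have i: "i < card P" and j: "j < card P" by auto
  have z: "B $$ (a,k) * M $$ (k,b) = 0" if "a \<in> P" "k \<in> Z" for a k b
  proof -
    have ak: "a < p" "k < p" using that Psub Zsub by auto
    have "a \<noteq> k" using that PZ(2) by blast
    then show ?thesis using Bz[OF ak] that(2) by simp
  qed
  show "(submatrix B P P * submatrix M P P) $$ (i,j) = 1\<^sub>m (card P) $$ (i,j)"
  proof -
    have pp: "pick P i < p" "pick P j < p" using pickP(2) i j by auto
    have "(submatrix B P P * submatrix M P P) $$ (i,j) = (B * M) $$ (pick P i, pick P j)"
      by (rule sub_prod[OF B M z i j])
    also have "\<dots> = (if pick P i = pick P j then 1 else 0)" unfolding BM using pp by simp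
    also have "\<dots> = (if i = j then 1 else 0)" unfolding pick_inj[OF finP i j] ..
    also have "\<dots> = 1\<^sub>m (card P) $$ (i,j)" using i j by simp
    finally show ?thesis .
  qed
qed (simp_all only: index_mult_mat(2,3) index_one_mat(2,3) carrier_matD[OF subP_carrier[OF M]] carrier_matD[OF subP_carrier[OF B]])

lemma minv_subP: "minv (submatrix M P P) = submatrix B P P"
  by (rule minv_unique[OF subP_carrier[OF M] subP_carrier[OF B] subP_inv1 subP_inv2])

lemma subZ: "submatrix B Z Z = (1 / d) \<cdot>\<^sub>m 1\<^sub>m (card Z)"
proof (rule eq_matI)
  have ce: "{i. i < p \<and> i \<in> Z} = Z" using Zsub by auto
  show "dim_row (submatrix B Z Z) = dim_row ((1 / d) \<cdot>\<^sub>m 1\<^sub>m (card Z))"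
       "dim_col (submatrix B Z Z) = dim_col ((1 / d) \<cdot>\<^sub>m 1\<^sub>m (card Z))"
    using B ce by (auto simp: dim_submatrix)
  fix i j assume "i < dim_row ((1 / d) \<cdot>\<^sub>m 1\<^sub>m (card Z))" "j < dim_col ((1 / d) \<cdot>\<^sub>m 1\<^sub>m (card Z))"
  then have i: "i < card Z" and j: "j < card Z" by auto
  have pz: "pick Z i \<in> Z" "pick Z j \<in> Z" using pick_in[OF finZ] i j by auto
  then have pp: "pick Z i < p" "pick Z j < p" using Zsub by auto
  have "submatrix B Z Z $$ (i,j) = B $$ (pick Z i, pick Z j)"
    using B ce i j by (intro submatrix_index) auto
  then show "submatrix B Z Z $$ (i,j) = ((1 / d) \<cdot>\<^sub>m 1\<^sub>m (card Z)) $$ (i,j)"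
    using Bz[OF pp] pz pick_inj[OF finZ i j] i j by simp
qed

end


lemma gram_sum:
  fixes x :: "nat \<Rightarrow> nat \<Rightarrow> real"
  shows "(\<Sum>i<p. a i * (\<Sum>j<p. (\<Sum>k<n. x k i * x k j) * a j)) = (\<Sum>k<n. (\<Sum>i<p. x k i * a i)^2)"
proof -
  have "(\<Sum>i<p. a i * (\<Sum>j<p. (\<Sum>k<n. x k i * x k j) * a j)) = (\<Sum>i<p. \<Sum>j<p. \<Sum>k<n. (x k i * a i) * (x k j * a j))"
    by (simp add: sum_distrib_left sum_distrib_right mult_ac)
  also have "\<dots> = (\<Sum>i<p. \<Sum>k<n. \<Sum>j<p. (x k i * a i) * (x k j * a j))"
    by (rule sum.cong[OF refl], rule sum.swap)
  also have "\<dots> = (\<Sum>k<n. \<Sum>i<p. \<Sum>j<p. (x k i * a i) * (x k j * a j))"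
    by (rule sum.swap)
  also have "\<dots> = (\<Sum>k<n. (\<Sum>i<p. x k i * a i)^2)"
    by (simp add: power2_eq_square sum_product)
  finally show ?thesis .
qed


lemma form_index:
  fixes c \<delta> :: real
  assumes t: "t \<in> carrier_vec q" and G: "G \<in> carrier_mat q q" and i: "i < q" and j: "j < q"
  shows "(c \<cdot>\<^sub>m (Tmat t * G * Tmat t + \<delta> \<cdot>\<^sub>m (1\<^sub>m q - Tmat t * Tmat t))) $$ (i,j)
     = c * (t $ i * G $$ (i,j) * t $ j + \<delta> * ((if i = j then 1 else 0) - (if i = j then t $ i * t $ i else 0)))"
proof -
  have T: "Tmat t \<in> carrier_mat q q" using t by (metis Tmat_carrier carrier_vecD)
  have p: "dim_vec t = q" using t by simp
  have 1: "(Tmat t * G * Tmat t) $$ (i,j) = t $ i * G $$ (i,j) * t $ j"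
    using mult_Tmat_right[of "Tmat t * G" q t i j] mult_Tmat_left[of G t q i j]
      G T i j p by simp
  have 2: "(Tmat t * Tmat t) $$ (i,j) = (if i = j then t $ i * t $ i else 0)"
    using mult_Tmat_left[of "Tmat t" t q i j] T i j p by (simp add: Tmat_index)
  have d: "dim_row (Tmat t * G * Tmat t) = q" "dim_col (Tmat t * G * Tmat t) = q"
    using p by simp_all
  have e: "dim_row (Tmat t * Tmat t) = q" "dim_col (Tmat t * Tmat t) = q" using p by simp_all
  show ?thesis using i j d e
    apply (subst index_smult_mat(1)) apply (simp add: d) apply (simp add: d) apply (subst index_add_mat(1)) apply (simp add: d) apply (simp add: d) apply (subst index_smult_mat(1)) apply (simp add: e) apply (simp add: e) apply (subst index_minus_mat(1)) apply (simp add: e) apply (simp add: e) apply (unfold 1 2) by simp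
qed

lemma L_carrier:
  assumes X: "X \<in> carrier_mat n p" and t: "t \<in> carrier_vec p"
  shows "Lmat X \<delta> t \<in> carrier_mat p p"
  using X t unfolding Lmat_def Xmat_def by auto

lemma L_kernel:
  assumes X: "X \<in> carrier_mat n p" and t: "t \<in> carrier_vec p" and n: "n > 0"
    and tb: "\<forall>j<p. 0 \<le> t $ j \<and> t $ j < 1" and dl: "\<delta> > 0"
    and v: "v \<in> carrier_vec p" and Lv: "Lmat X \<delta> t *\<^sub>v v = 0\<^sub>v p"
  shows "v = 0\<^sub>v p"
proof -
  let ?L = "Lmat X \<delta> t"
  let ?G = "transpose_mat X * X"
  have LC: "?L \<in> carrier_mat p p" by (rule L_carrier[OF X t])
  have Gi: "?G $$ (i,j) = (\<Sum>k<n. X $$ (k,i) * X $$ (k,j))" if "i < p" "j < p" for i j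
    using X that by (simp add: scalar_prod_def atLeast0LessThan)
  have row: "(\<Sum>j<p. ?L $$ (i,j) * v $ j) = (1 / real n) * (t $ i * (\<Sum>j<p. ?G $$ (i,j) * (t $ j * v $ j)))
      + (1 / real n) * \<delta> * (1 - t $ i * t $ i) * v $ i" if i: "i < p" for i
  proof -
    have "(\<Sum>j<p. ?L $$ (i,j) * v $ j) = (\<Sum>j<p. (1 / real n) * (t $ i * (?G $$ (i,j) * (t $ j * v $ j)))
       + (if j = i then (1 / real n) * \<delta> * (1 - t $ i * t $ i) * v $ i else 0))"
      by (rule sum.cong) (auto simp: L_index[OF X t] i algebra_simps)
    also have "\<dots> = (\<Sum>j<p. (1 / real n) * (t $ i * (?G $$ (i,j) * (t $ j * v $ j))))
       + (1 / real n) * \<delta> * (1 - t $ i * t $ i) * v $ i"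
      using i by (simp add: sum.distrib)
    also have "\<dots> = (1 / real n) * (t $ i * (\<Sum>j<p. ?G $$ (i,j) * (t $ j * v $ j)))
      + (1 / real n) * \<delta> * (1 - t $ i * t $ i) * v $ i"
      by (simp add: sum_distrib_left)
    finally show ?thesis .
  qed
  have zero: "(\<Sum>j<p. ?L $$ (i,j) * v $ j) = 0" if i: "i < p" for i
  proof -
    have "(?L *\<^sub>v v) $ i = 0" using Lv i by simp
    moreover have "(?L *\<^sub>v v) $ i = (\<Sum>j<p. ?L $$ (i,j) * v $ j)"
      using LC v i by (simp add: scalar_prod_def atLeast0LessThan)
    ultimately show ?thesis by simp
  qed
  define a where "a = (\<lambda>i. t $ i * v $ i)"
  have "0 = (\<Sum>i<p. v $ i * (\<Sum>j<p. ?L $$ (i,j) * v $ j))" using zero by simp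
  also have "\<dots> = (\<Sum>i<p. (1 / real n) * (a i * (\<Sum>j<p. (\<Sum>k<n. X $$ (k,i) * X $$ (k,j)) * a j))
      + (1 / real n) * \<delta> * ((1 - t $ i * t $ i) * (v $ i)^2))"
  proof (rule sum.cong[OF refl])
    fix i assume "i \<in> {..<p}"
    then have i: "i < p" by simp
    have inner: "(\<Sum>j<p. ?G $$ (i,j) * (t $ j * v $ j)) = (\<Sum>j<p. (\<Sum>k<n. X $$ (k,i) * X $$ (k,j)) * a j)"
      by (rule sum.cong) (simp_all add: Gi i a_def)
    show "v $ i * (\<Sum>j<p. ?L $$ (i,j) * v $ j) = (1 / real n) * (a i * (\<Sum>j<p. (\<Sum>k<n. X $$ (k,i) * X $$ (k,j)) * a j))
      + (1 / real n) * \<delta> * ((1 - t $ i * t $ i) * (v $ i)^2)"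
      unfolding row[OF i] inner[symmetric] unfolding a_def by (simp add: algebra_simps power2_eq_square)
  qed
  also have "\<dots> = (1 / real n) * (\<Sum>k<n. (\<Sum>i<p. X $$ (k,i) * a i)^2)
      + (1 / real n) * \<delta> * (\<Sum>i<p. (1 - t $ i * t $ i) * (v $ i)^2)"
  proof -
    have g: "(\<Sum>i<p. a i * (\<Sum>j<p. (\<Sum>k<n. X $$ (k,i) * X $$ (k,j)) * a j)) = (\<Sum>k<n. (\<Sum>i<p. X $$ (k,i) * a i)^2)"
      using gram_sum[where a=a and p=p and x="\<lambda>k i. X $$ (k,i)" and n=n] by simp
    show ?thesis by (simp only: sum.distrib sum_distrib_left[symmetric] g)
  qed
  finally have E: "(1 / real n) * (\<Sum>k<n. (\<Sum>i<p. X $$ (k,i) * a i)^2)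
      + (1 / real n) * \<delta> * (\<Sum>i<p. (1 - t $ i * t $ i) * (v $ i)^2) = 0" by simp
  have nn: "\<forall>i\<in>{..<p}. 0 \<le> (1 - t $ i * t $ i) * (v $ i)^2"
  proof
    fix i assume "i \<in> {..<p}"
    then have "0 \<le> t $ i" "t $ i < 1" using tb by auto
    then have "0 \<le> 1 - t $ i * t $ i" by (simp add: mult_le_one)
    then show "0 \<le> (1 - t $ i * t $ i) * (v $ i)^2" by simp
  qed
  have A1: "0 \<le> (1 / real n) * (\<Sum>k<n. (\<Sum>i<p. X $$ (k,i) * a i)^2)"
    by (intro mult_nonneg_nonneg sum_nonneg) auto
  have A2: "0 \<le> (\<Sum>i<p. (1 - t $ i * t $ i) * (v $ i)^2)"
    using nn by (intro sum_nonneg) auto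
  have c: "0 < (1 / real n) * \<delta>" using n dl by simp
  have "(1 / real n) * \<delta> * (\<Sum>i<p. (1 - t $ i * t $ i) * (v $ i)^2) = 0"
    using E A1 A2 c by (smt (verit) mult_nonneg_nonneg)
  then have S: "(\<Sum>i<p. (1 - t $ i * t $ i) * (v $ i)^2) = 0" using c dl n by simp
  show ?thesis
  proof (rule eq_vecI)
    show "dim_vec v = dim_vec (0\<^sub>v p)" using v by simp
    fix i assume "i < dim_vec (0\<^sub>v p)"
    then have i: "i < p" by simp
    have "(1 - t $ i * t $ i) * (v $ i)^2 = 0"
      using sum_nonneg_eq_0_iff[of "{..<p}" "\<lambda>i. (1 - t $ i * t $ i) * (v $ i)^2"] S nn i by simp
    moreover have "0 < 1 - t $ i * t $ i"
    proof -
      have "0 \<le> t $ i" "t $ i < 1" using tb i by auto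
      then have "t $ i * t $ i < 1" by (metis le_less_trans mult_le_one less_imp_le mult_less_cancel_right1 mult_strict_mono zero_less_one mult_1_left less_le_not_le) 
      then show ?thesis by simp
    qed
    ultimately show "v $ i = 0\<^sub>v p $ i" using i by simp
  qed
qed


lemma subvec_had:
  assumes "dim_vec s = dim_vec t"
  shows "subvec (t \<odot> s) I = subvec t I \<odot> subvec s I"
proof (rule eq_vecI)
  show "dim_vec (subvec (t \<odot> s) I) = dim_vec (subvec t I \<odot> subvec s I)"
    unfolding subvec_def hadamard_def by simp
  fix i assume "i < dim_vec (subvec t I \<odot> subvec s I)"
  then have i: "i < card {k. k < dim_vec t \<and> k \<in> I}" unfolding subvec_def hadamard_def by simp
  have "pick I i < dim_vec t" using pick_le[OF i] .
  then show "subvec (t \<odot> s) I $ i = (subvec t I \<odot> subvec s I) $ i"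
    using i assms unfolding subvec_def hadamard_def by simp
qed

context blk
begin

lemma dimBu: "u \<in> carrier_vec p \<Longrightarrow> dim_vec (B *\<^sub>v u) = p" using B by simp

lemma subvec_Z:
  assumes u: "u \<in> carrier_vec p" and uz: "\<And>k. k \<in> Z \<Longrightarrow> u $ k = 0"
  shows "subvec (B *\<^sub>v u) Z = 0\<^sub>v (card Z)"
proof -
  have ce: "{i. i < p \<and> i \<in> Z} = Z" using Zsub by auto
  have dv: "dim_vec (B *\<^sub>v u) = p" using dimBu[OF u] .
  show ?thesis
  proof (rule eq_vecI)
    show "dim_vec (subvec (B *\<^sub>v u) Z) = dim_vec (0\<^sub>v (card Z))"
      unfolding subvec_def dv ce by simp
    fix i assume "i < dim_vec (0\<^sub>v (card Z))"
    then have i: "i < card Z" by simp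
    have zi: "pick Z i \<in> Z" using pick_in[OF finZ i] .
    then have zp: "pick Z i < p" using Zsub by auto
    have "subvec (B *\<^sub>v u) Z $ i = (B *\<^sub>v u) $ pick Z i"
      unfolding subvec_def dv ce using i by simp
    also have "\<dots> = (\<Sum>k\<in>{0..<p}. B $$ (pick Z i, k) * u $ k)"
      using B u zp by (simp add: scalar_prod_def)
    also have "\<dots> = (\<Sum>k\<in>{0..<p}. (if k = pick Z i then u $ pick Z i / d else 0))"
      by (rule sum.cong) (auto simp: Bz zp zi)
    also have "\<dots> = 0" using zp uz[OF zi] by simp
    finally show "subvec (B *\<^sub>v u) Z $ i = 0\<^sub>v (card Z) $ i" using i by simp
  qed
qed

lemma subvec_P:
  assumes u: "u \<in> carrier_vec p"
  shows "subvec (B *\<^sub>v u) P = submatrix B P P *\<^sub>v subvec u P"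
proof -
  have ce: "{i. i < p \<and> i \<in> P} = P" by (rule collect_eq[OF Psub])
  have dv: "dim_vec (B *\<^sub>v u) = p" using dimBu[OF u] .
  have du: "dim_vec u = p" using u by simp
  have SB: "submatrix B P P \<in> carrier_mat (card P) (card P)" by (rule subP_carrier[OF B])
  have dsu: "dim_vec (subvec u P) = card P" unfolding subvec_def du ce by simp
  show ?thesis
  proof (rule eq_vecI)
    show "dim_vec (subvec (B *\<^sub>v u) P) = dim_vec (submatrix B P P *\<^sub>v subvec u P)"
      unfolding subvec_def dv ce using SB by simp
    fix i assume "i < dim_vec (submatrix B P P *\<^sub>v subvec u P)"
    then have i: "i < card P" using SB by simp
    have pp: "pick P i \<in> P" "pick P i < p" using pickP i by auto
    have "subvec (B *\<^sub>v u) P $ i = (B *\<^sub>v u) $ pick P i"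
      unfolding subvec_def dv ce using i by simp
    also have "\<dots> = (\<Sum>k\<in>{0..<p}. B $$ (pick P i, k) * u $ k)"
      using B u pp by (simp add: scalar_prod_def)
    also have "\<dots> = (\<Sum>k\<in>P. B $$ (pick P i, k) * u $ k)"
    proof (rule sum.mono_neutral_right)
      show "finite {0..<p}" by simp
      show "P \<subseteq> {0..<p}" using Psub by auto
      show "\<forall>k\<in>{0..<p} - P. B $$ (pick P i, k) * u $ k = 0"
      proof
        fix k assume k: "k \<in> {0..<p} - P"
        then have "k \<in> Z" "k < p" using PZ by auto
        moreover have "pick P i \<noteq> k" using pp k by auto
        ultimately show "B $$ (pick P i, k) * u $ k = 0" using Bz[OF pp(2)] by simp
      qed
    qed
    also have "\<dots> = (\<Sum>l<card P. B $$ (pick P i, pick P l) * u $ pick P l)"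
      by (rule sum_pick[OF finP, symmetric])
    also have "\<dots> = (\<Sum>l\<in>{0..<card P}. submatrix B P P $$ (i, l) * subvec u P $ l)"
    proof (rule sum.cong)
      show "{..<card P} = {0..<card P}" by auto
      fix l assume "l \<in> {0..<card P}"
      then have l: "l < card P" by simp
      have "subvec u P $ l = u $ pick P l" unfolding subvec_def du ce using l by simp
      then show "B $$ (pick P i, pick P l) * u $ pick P l = submatrix B P P $$ (i, l) * subvec u P $ l"
        using subP_index[OF B i l] by simp
    qed
    also have "\<dots> = (submatrix B P P *\<^sub>v subvec u P) $ i"
      using SB i dsu by (simp add: scalar_prod_def)
    finally show "subvec (B *\<^sub>v u) P $ i = (submatrix B P P *\<^sub>v subvec u P) $ i" .
  qed
qed

end



lemma sub_Tmat:
  assumes t: "t \<in> carrier_vec p" and Ps: "P \<subseteq> {..<p}"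
  shows "submatrix (Tmat t) P P = Tmat (subvec t P)"
proof -
  have ce: "{i. i < p \<and> i \<in> P} = P" by (rule collect_eq[OF Ps])
  have fin: "finite P" using Ps finite_subset by blast
  have dt: "dim_vec t = p" using t by simp
  have ds: "dim_vec (subvec t P) = card P" unfolding subvec_def dt ce by simp
  show ?thesis
  proof (rule eq_matI)
    show "dim_row (submatrix (Tmat t) P P) = dim_row (Tmat (subvec t P))"
      unfolding dim_submatrix Tmat_dims ds dt ce ..
    show "dim_col (submatrix (Tmat t) P P) = dim_col (Tmat (subvec t P))"
      unfolding dim_submatrix Tmat_dims ds dt ce ..
    fix i j assume "i < dim_row (Tmat (subvec t P))" "j < dim_col (Tmat (subvec t P))"
    then have i: "i < card P" and j: "j < card P" unfolding Tmat_dims ds by auto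
    have pp: "pick P i < p" "pick P j < p" using pick_in[OF fin i] pick_in[OF fin j] Ps by auto
    have "submatrix (Tmat t) P P $$ (i,j) = Tmat t $$ (pick P i, pick P j)"
      by (rule submatrix_index) (simp_all only: Tmat_dims dt ce i j)
    also have "\<dots> = (if i = j then t $ pick P i else 0)"
      using pp pick_inj[OF fin i j] by (simp add: Tmat_index dt)
    also have "\<dots> = Tmat (subvec t P) $$ (i,j)"
      using i j ds by (simp add: Tmat_index subvec_def dt ce)
    finally show "submatrix (Tmat t) P P $$ (i,j) = Tmat (subvec t P) $$ (i,j)" .
  qed
qed

lemma XTy:
  assumes X: "X \<in> carrier_mat n p" and t: "t \<in> carrier_vec p" and y: "y \<in> carrier_vec n"
  shows "(1 / real n) \<cdot>\<^sub>v (transpose_mat (Xmat X t) *\<^sub>v y) = t \<odot> ((1 / real n) \<cdot>\<^sub>v (transpose_mat X *\<^sub>v y))"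
proof (rule eq_vecI)
  have dt: "dim_vec t = p" using t by simp
  show "dim_vec ((1 / real n) \<cdot>\<^sub>v (transpose_mat (Xmat X t) *\<^sub>v y)) = dim_vec (t \<odot> ((1 / real n) \<cdot>\<^sub>v (transpose_mat X *\<^sub>v y)))"
    using X t unfolding Xmat_def hadamard_def by simp
  fix i assume "i < dim_vec (t \<odot> ((1 / real n) \<cdot>\<^sub>v (transpose_mat X *\<^sub>v y)))"
  then have i: "i < p" using dt unfolding hadamard_def by simp
  have W: "Xmat X t \<in> carrier_mat n p" using X t unfolding Xmat_def by (metis Tmat_carrier carrier_vecD mult_carrier_mat)
  have "(transpose_mat (Xmat X t) *\<^sub>v y) $ i = (\<Sum>k\<in>{0..<n}. Xmat X t $$ (k,i) * y $ k)"
    using W y i by (simp add: scalar_prod_def)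
  also have "\<dots> = (\<Sum>k\<in>{0..<n}. (X $$ (k,i) * y $ k) * t $ i)"
    by (rule sum.cong) (use mult_Tmat_right[of X n t _ i] X dt i in \<open>auto simp: Xmat_def\<close>)
  also have "\<dots> = t $ i * (transpose_mat X *\<^sub>v y) $ i"
    using X y i by (simp add: scalar_prod_def sum_distrib_left mult_ac)
  finally show "((1 / real n) \<cdot>\<^sub>v (transpose_mat (Xmat X t) *\<^sub>v y)) $ i = (t \<odot> ((1 / real n) \<cdot>\<^sub>v (transpose_mat X *\<^sub>v y))) $ i"
    using W X i dt unfolding hadamard_def by simp
qed

theorem theorem6:
  fixes n p :: nat and X :: "real mat" and y t :: "real vec" and \<delta> :: real
  assumes "n > 0" and "p > 0"
    and "X \<in> carrier_mat n p" and "y \<in> carrier_vec n" and "\<delta> > 0"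
    and "t \<in> carrier_vec p" and "\<forall>j<p. 0 \<le> t $ j \<and> t $ j < 1"
  shows "(submatrix (Lmat X \<delta> t) (Pset t) (Pset t) =
           (1 / real n) \<cdot>\<^sub>m
             (submatrix (Tmat t) (Pset t) (Pset t) * submatrix (transpose_mat X * X) (Pset t) (Pset t)
                * submatrix (Tmat t) (Pset t) (Pset t)
              + \<delta> \<cdot>\<^sub>m (1\<^sub>m (card (Pset t))
                   - submatrix (Tmat t) (Pset t) (Pset t) * submatrix (Tmat t) (Pset t) (Pset t)))
    \<and> submatrix (minv (Lmat X \<delta> t)) (Zset t) (Zset t) = (real n / \<delta>) \<cdot>\<^sub>m 1\<^sub>m (card (Zset t))
    \<and> submatrix (minv (Lmat X \<delta> t)) (Pset t) (Pset t) = minv (submatrix (Lmat X \<delta> t) (Pset t) (Pset t))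
    \<and> subvec (betat X y \<delta> t) (Zset t) = 0\<^sub>v (card (Zset t))
    \<and> subvec (betat X y \<delta> t) (Pset t) =
           minv (submatrix (Lmat X \<delta> t) (Pset t) (Pset t)) *\<^sub>v
             (subvec t (Pset t) \<odot> subvec ((1 / real n) \<cdot>\<^sub>v (transpose_mat X *\<^sub>v y)) (Pset t))
    \<and> subvec (cvec X y \<delta> t) (Zset t) = 0\<^sub>v (card (Zset t))
    \<and> subvec (cvec X y \<delta> t) (Pset t) =
           minv (submatrix (Lmat X \<delta> t) (Pset t) (Pset t)) *\<^sub>v
             (subvec t (Pset t) \<odot> subvec (avec X y \<delta> t) (Pset t)))"
proof -
  note X = assms(3) and y = assms(4) and dl = assms(5) and t = assms(6) and tb = assms(7) and n = assms(1)
  define L where "L = Lmat X \<delta> t"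
  define P where "P = Pset t"
  define Z where "Z = Zset t"
  have dt: "dim_vec t = p" using t by simp
  have LC: "L \<in> carrier_mat p p" unfolding L_def by (rule L_carrier[OF X t])
  have dL: "det L \<noteq> 0"
  proof
    assume "det L = 0"
    then obtain v where v: "v \<in> carrier_vec p" "v \<noteq> 0\<^sub>v p" "L *\<^sub>v v = 0\<^sub>v p"
      using det_0_iff_vec_prod_zero[OF LC] by blast
    then show False using L_kernel[OF X t n tb dl v(1)] unfolding L_def by simp
  qed
  have "L \<in> Units (ring_mat TYPE(real) p ())" by (rule det_non_zero_imp_unit[OF LC dL])
  then obtain B where B: "B \<in> carrier_mat p p" "B * L = 1\<^sub>m p" "L * B = 1\<^sub>m p"
    unfolding Units_def ring_mat_def by auto
  have mB: "minv L = B" by (rule minv_unique[OF LC B(1) B(3) B(2)])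
  have PZ: "P \<union> Z = {..<p}" "P \<inter> Z = {}" unfolding P_def Z_def Pset_def Zset_def dt by auto
  have Mz: "L $$ (i,j) = (if i = j then \<delta> / real n else 0)" if ij: "i < p" "j < p" "i \<in> Z \<or> j \<in> Z" for i j
  proof -
    have "t $ i = 0 \<or> t $ j = 0" using ij(3) unfolding Z_def Zset_def by auto
    then show ?thesis unfolding L_def L_index[OF X t ij(1,2)] by auto
  qed
  have dn: "\<delta> / real n \<noteq> 0" using dl n by simp
  interpret blk L B p P Z "\<delta> / real n"
    by (rule blk.intro[OF LC B(1) B(3) B(2) dn PZ(1) PZ(2) Mz])
  let ?G = "transpose_mat X * X"
  have GC: "?G \<in> carrier_mat p p" using X by simp
  have ce: "{i. i < p \<and> i \<in> P} = P" by (rule collect_eq[OF Psub])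
  define t' where "t' = subvec t P"
  have dt': "dim_vec t' = card P" unfolding t'_def subvec_def dt ce by simp
  have t'C: "t' \<in> carrier_vec (card P)" by (rule carrier_vecI[OF dt'])
  have t'i: "t' $ i = t $ pick P i" if "i < card P" for i
    using that unfolding t'_def subvec_def dt ce by simp
  have ST: "submatrix (Tmat t) P P = Tmat t'" unfolding t'_def by (rule sub_Tmat[OF t Psub])
  have SG: "submatrix ?G P P \<in> carrier_mat (card P) (card P)" by (rule subP_carrier[OF GC])
  have c1: "submatrix L P P = (1 / real n) \<cdot>\<^sub>m (Tmat t' * submatrix ?G P P * Tmat t'
      + \<delta> \<cdot>\<^sub>m (1\<^sub>m (card P) - Tmat t' * Tmat t'))"
  proof (rule eq_matI)
    have TC: "Tmat t' \<in> carrier_mat (card P) (card P)" using dt' by (metis Tmat_carrier)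
    have SL: "submatrix L P P \<in> carrier_mat (card P) (card P)" by (rule subP_carrier[OF LC])
    show "dim_row (submatrix L P P) = dim_row ((1 / real n) \<cdot>\<^sub>m (Tmat t' * submatrix ?G P P * Tmat t'
      + \<delta> \<cdot>\<^sub>m (1\<^sub>m (card P) - Tmat t' * Tmat t')))"
      using carrier_matD[OF SL] carrier_matD[OF TC] carrier_matD[OF SG] by (simp only: index_smult_mat(2,3) index_add_mat(2,3) index_mult_mat(2,3) index_minus_mat(2,3))
    show "dim_col (submatrix L P P) = dim_col ((1 / real n) \<cdot>\<^sub>m (Tmat t' * submatrix ?G P P * Tmat t'
      + \<delta> \<cdot>\<^sub>m (1\<^sub>m (card P) - Tmat t' * Tmat t')))"
      using carrier_matD[OF SL] carrier_matD[OF TC] carrier_matD[OF SG] by (simp only: index_smult_mat(2,3) index_add_mat(2,3) index_mult_mat(2,3) index_minus_mat(2,3))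
    fix i j assume "i < dim_row ((1 / real n) \<cdot>\<^sub>m (Tmat t' * submatrix ?G P P * Tmat t'
      + \<delta> \<cdot>\<^sub>m (1\<^sub>m (card P) - Tmat t' * Tmat t')))"
      "j < dim_col ((1 / real n) \<cdot>\<^sub>m (Tmat t' * submatrix ?G P P * Tmat t'
      + \<delta> \<cdot>\<^sub>m (1\<^sub>m (card P) - Tmat t' * Tmat t')))"
    then have i: "i < card P" and j: "j < card P" using carrier_matD[OF TC] carrier_matD[OF SG] by (simp_all only: index_smult_mat(2,3) index_add_mat(2,3) index_mult_mat(2,3) index_minus_mat(2,3))
    have pp: "pick P i < p" "pick P j < p" using pickP i j by auto
    have "submatrix L P P $$ (i,j) = L $$ (pick P i, pick P j)" by (rule subP_index[OF LC i j])
    also have "\<dots> = (1 / real n) * (t $ pick P i * ?G $$ (pick P i, pick P j) * t $ pick P j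
      + \<delta> * ((if pick P i = pick P j then 1 else 0) - (if pick P i = pick P j then t $ pick P i * t $ pick P i else 0)))"
      unfolding L_def by (rule L_index[OF X t pp])
    also have "\<dots> = (1 / real n) * (t' $ i * submatrix ?G P P $$ (i,j) * t' $ j
      + \<delta> * ((if i = j then 1 else 0) - (if i = j then t' $ i * t' $ i else 0)))"
      unfolding t'i[OF i] t'i[OF j] subP_index[OF GC i j] pick_inj[OF finP i j] ..
    also have "\<dots> = ((1 / real n) \<cdot>\<^sub>m (Tmat t' * submatrix ?G P P * Tmat t'
      + \<delta> \<cdot>\<^sub>m (1\<^sub>m (card P) - Tmat t' * Tmat t'))) $$ (i,j)"
      by (rule form_index[OF t'C SG i j, symmetric])
    finally show "submatrix L P P $$ (i,j) = ((1 / real n) \<cdot>\<^sub>m (Tmat t' * submatrix ?G P P * Tmat t'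
      + \<delta> \<cdot>\<^sub>m (1\<^sub>m (card P) - Tmat t' * Tmat t'))) $$ (i,j)" .
  qed
  have c2: "submatrix B Z Z = (real n / \<delta>) \<cdot>\<^sub>m 1\<^sub>m (card Z)" 
  proof -
    have "1 / (\<delta> / real n) = real n / \<delta>" by simp
    then show ?thesis using subZ by metis
  qed
  define s where "s = (1 / real n) \<cdot>\<^sub>v (transpose_mat X *\<^sub>v y)"
  have sC: "s \<in> carrier_vec p" unfolding s_def using X y by simp
  have bet: "betat X y \<delta> t = B *\<^sub>v (t \<odot> s)"
  proof -
    have dX: "dim_row X = n" using X by simp
    have "betat X y \<delta> t = minv L *\<^sub>v ((1 / real n) \<cdot>\<^sub>v (transpose_mat (Xmat X t) *\<^sub>v y))"
      unfolding betat_def L_def dX ..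
    then show ?thesis unfolding XTy[OF X t y] mB s_def .
  qed
  define a where "a = avec X y \<delta> t"
  have aC: "a \<in> carrier_vec p" unfolding a_def avec_def hadamard_def using X y by (intro carrier_vecI) simp
  have cv: "cvec X y \<delta> t = B *\<^sub>v (t \<odot> a)"
    unfolding cvec_def a_def mB[unfolded L_def] ..
  have hadC: "t \<odot> w \<in> carrier_vec p" for w unfolding hadamard_def using dt by simp
  have hadZ: "(t \<odot> w) $ k = 0" if "k \<in> Z" for w k
    using that unfolding hadamard_def Z_def Zset_def by auto
  have b1: "subvec (betat X y \<delta> t) Z = 0\<^sub>v (card Z)"
    unfolding bet by (rule subvec_Z[OF hadC hadZ])
  have b2: "subvec (betat X y \<delta> t) P = submatrix B P P *\<^sub>v (subvec t P \<odot> subvec s P)"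
    unfolding bet subvec_P[OF hadC] using subvec_had[of s t P] sC dt by simp
  have v1: "subvec (cvec X y \<delta> t) Z = 0\<^sub>v (card Z)"
    unfolding cv by (rule subvec_Z[OF hadC hadZ])
  have v2: "subvec (cvec X y \<delta> t) P = submatrix B P P *\<^sub>v (subvec t P \<odot> subvec a P)"
    unfolding cv subvec_P[OF hadC] using subvec_had[of a t P] aC dt by simp
  show ?thesis
    using c1 c2 minv_subP b1 b2 v1 v2 ST
    unfolding L_def[symmetric] P_def[symmetric] Z_def[symmetric] mB t'_def[symmetric] s_def[symmetric] a_def[symmetric]
    by simp
qed

end
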